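(* In the setting below, if $S_1,S_2\in\mathrm{Lin}(\mathcal{C}_1,\mathcal{C}_2)^\tau$, then there exists $R\ge 0$ such that $d_{\mathcal{C}_2}(S_1(x),S_2(x))\le R$ for all $x\in\mathcal{C}_1$.
   Context: Let $M_i=\Gamma_i\backslash\Omega_i$ ($i=1,2$) be compact proper convex real projective manifolds ($\Omega_i\subset\mathbb{P}(\mathbb{R}^{d_i+1})$ proper convex open, $\Gamma_i$ discrete acting properly discontinuously, freely, cocompactly). Let $\mathcal{C}_i$ be a component of the preimage of $\Omega_i$ in $\mathbb{R}^{d_i+1}\setminus\{0\}$ (a convex open cone containing no affine line), $\overline\Gamma_i=\{\gamma\in\mathrm{GL}_{d_i+1}(\mathbb{R}):|\det\gamma|=1,\gamma\mathcal{C}_i=\mathcal{C}_i,[\gamma]\in\Gamma_i\}$ and $\Lambda_i=\langle\overline\Gamma_i,e\,\mathrm{Id}\rangle$, a discrete group acting cocompactly on $\mathcal{C}_i$. Let $\tau:\Lambda_1\to\Lambda_2$ be a homomorphism. $\mathrm{Lin}(\mathcal{C}_1,\mathcal{C}_2)^\tau$ is the set of linear maps $S:\mathbb{R}^{d_1+1}\to\mathbb{R}^{d_2+1}$ with $S(\mathcal{C}_1)\subset\mathcal{C}_2$ and $S\circ\phi=\tau(\phi)\circ S$ for all $\phi\in\Lambda_1$. Viewing $\mathbb{R}^{d_2+1}$ as an affine chart of $\mathbb{P}(\mathbb{R}^{d_2+2})$, $\mathcal{C}_2$ is a proper convex open set and $d_{\mathcal{C}_2}$ is its Hilbert metric: $d(x,y)=\log\frac{|x-b||y-a|}{|x-a||y-b|}$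 where $a,b$ are the boundary points (possibly at infinity) on the line through $x,y$, ordered $a,x,y,b$. *)

theory Defs
  imports "HOL-Analysis.Analysis"
begin

text \<open>A projective transformation [g] is represented through the full preimage
  of the group Gamma in GL (a set of invertible matrices closed under
  nonzero scaling).  The proper convex set Omega is represented by the
  cone C (a component of its preimage).\<close>

definition proper_convex_cone :: "('a::euclidean_space) set \<Rightarrow> bool" where
  "proper_convex_cone C \<longleftrightarrow> open C \<and> convex C \<and> C \<noteq> {} \<and>
     (\<forall>x\<in>C. \<forall>t>0. t *\<^sub>R x \<in> C) \<and>
     \<not> (\<exists>p v. v \<noteq> 0 \<and> (\<forall>s::real. p + s *\<^sub>R v \<in> C))"

definition lifted_group ::
  "(real^'n) set \<Rightarrow> (real^'n^'n) set \<Rightarrow> (real^'n^'n) set" where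
  "lifted_group C G = {g. \<bar>det g\<bar> = 1 \<and> (\<lambda>x. g *v x) ` C = C \<and> g \<in> G}"

definition generated_matrix_group :: "(real^'n^'n) set \<Rightarrow> (real^'n^'n) set" where
  "generated_matrix_group S = \<Inter>{H. S \<subseteq> H \<and> mat 1 \<in> H \<and>
      (\<forall>a\<in>H. \<forall>b\<in>H. a ** b \<in> H) \<and> (\<forall>a\<in>H. invertible a \<and> matrix_inv a \<in> H)}"

definition Lambda_group :: "(real^'n) set \<Rightarrow> (real^'n^'n) set \<Rightarrow> (real^'n^'n) set" where
  "Lambda_group C G = generated_matrix_group (lifted_group C G \<union> {exp 1 *\<^sub>R mat 1})"

text \<open>C is a cone over a proper convex open set Omega in projective space and G
  is the preimage in GL of a discrete group Gamma of projective transformations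
  preserving Omega, acting properly discontinuously, freely and cocompactly on Omega.
  Via the unique lift of each element of Gamma to lifted_group C G, these
  conditions are expressed on the cone (points of Omega = open rays of C).\<close>
definition compact_convex_projective_manifold_data ::
  "(real^'n) set \<Rightarrow> (real^'n^'n) set \<Rightarrow> bool" where
  "compact_convex_projective_manifold_data C G \<longleftrightarrow>
     proper_convex_cone C \<and>
     \<comment> \<open>G is a subgroup of GL, full preimage of Gamma in GL\<close>
     mat 1 \<in> G \<and> (\<forall>a\<in>G. \<forall>b\<in>G. a ** b \<in> G) \<and>
     (\<forall>a\<in>G. invertible a \<and> matrix_inv a \<in> G) \<and>
     (\<forall>a\<in>G. \<forall>c::real. c \<noteq> 0 \<longrightarrow> c *\<^sub>R a \<in> G) \<and>
     \<comment> \<open>Gamma preserves Omega\<close>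
     (\<forall>g\<in>G. (\<lambda>x. g *v x) ` C = C \<or> (\<lambda>x. g *v x) ` C = uminus ` C) \<and>
     \<comment> \<open>Gamma is discrete\<close>
     (\<exists>e>0. \<forall>h\<in>G. \<bar>det h\<bar> = 1 \<and> norm (h - mat 1) < e \<longrightarrow> h = mat 1) \<and>
     \<comment> \<open>properly discontinuous action on Omega\<close>
     (\<forall>K. compact K \<and> K \<subseteq> C \<longrightarrow>
        finite {g\<in>lifted_group C G. \<exists>x\<in>K. \<exists>t>0. t *\<^sub>R (g *v x) \<in> K}) \<and>
     \<comment> \<open>free action on Omega\<close>
     (\<forall>g\<in>lifted_group C G. (\<exists>x\<in>C. \<exists>t>0. g *v x = t *\<^sub>R x) \<longrightarrow> g = mat 1) \<and>
     \<comment> \<open>cocompact action on Omega\<close>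
     (\<exists>K. compact K \<and> K \<subseteq> C \<and>
        (\<forall>x\<in>C. \<exists>g\<in>lifted_group C G. \<exists>t>0. t *\<^sub>R (g *v x) \<in> K))"

definition Lin_equiv ::
  "(real^'n) set \<Rightarrow> (real^'m) set \<Rightarrow> (real^'n^'n) set \<Rightarrow>
   (real^'n^'n \<Rightarrow> real^'m^'m) \<Rightarrow> (real^'n^'m) set" where
  "Lin_equiv C1 C2 L1 \<tau> = {S. (\<forall>x\<in>C1. S *v x \<in> C2) \<and> (\<forall>\<phi>\<in>L1. S ** \<phi> = \<tau> \<phi> ** S)}"

text \<open>Hilbert metric of a convex open set C (in an affine chart):
  log(|x-b||y-a| / (|x-a||y-b|)) with a, b the endpoints of the chord through x, y
  (order a, x, y, b); a ratio involving an endpoint at infinity equals 1.\<close>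
definition hilbert_dist :: "('a::euclidean_space) set \<Rightarrow> 'a \<Rightarrow> 'a \<Rightarrow> real" where
  "hilbert_dist C x y =
    (if x = y then 0 else
     (let I = {s::real. x + s *\<^sub>R (y - x) \<in> C};
          ra = (if bdd_below I then
                  (let a = x + Inf I *\<^sub>R (y - x) in dist y a / dist x a) else 1);
          rb = (if bdd_above I then
                  (let b = x + Sup I *\<^sub>R (y - x) in dist x b / dist y b) else 1)
      in ln (ra * rb)))"

end

theory Submission
  imports Defs
begin

definition ra_of :: "real set \<Rightarrow> real" where
  "ra_of I = (if bdd_below I then \<bar>1 - Inf I\<bar> / \<bar>Inf I\<bar> else 1)"
definition rb_of :: "real set \<Rightarrow> real" where
  "rb_of I = (if bdd_above I then \<bar>Sup I\<bar> / \<bar>Sup I - 1\<bar> else 1)"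

lemma ratio_eq:
  fixes x y :: "'a::euclidean_space"
  assumes "x \<noteq> y"
  shows "dist y (x + t *\<^sub>R (y - x)) / dist x (x + t *\<^sub>R (y - x)) = \<bar>1 - t\<bar> / \<bar>t\<bar>"
proof -
  have n: "norm (y - x) > 0" using assms by simp
  have "dist y (x + t *\<^sub>R (y - x)) = norm ((1 - t) *\<^sub>R (y - x))"
    by (simp add: dist_norm algebra_simps)
  also have "\<dots> = \<bar>1 - t\<bar> * norm (y - x)" by simp
  finally have 1: "dist y (x + t *\<^sub>R (y - x)) = \<bar>1 - t\<bar> * norm (y - x)" .
  have 2: "dist x (x + t *\<^sub>R (y - x)) = \<bar>t\<bar> * norm (y - x)"
    by (simp add: dist_norm)
  show ?thesis unfolding 1 2 using n by simp
qed

lemma ratio_eq2: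
  fixes x y :: "'a::euclidean_space"
  assumes "x \<noteq> y"
  shows "dist x (x + t *\<^sub>R (y - x)) / dist y (x + t *\<^sub>R (y - x)) = \<bar>t\<bar> / \<bar>t - 1\<bar>"
proof -
  have n: "norm (y - x) > 0" using assms by simp
  have "dist y (x + t *\<^sub>R (y - x)) = norm ((1 - t) *\<^sub>R (y - x))"
    by (simp add: dist_norm algebra_simps)
  also have "\<dots> = \<bar>t - 1\<bar> * norm (y - x)" by (simp add: abs_minus_commute)
  finally have 1: "dist y (x + t *\<^sub>R (y - x)) = \<bar>t - 1\<bar> * norm (y - x)" .
  have 2: "dist x (x + t *\<^sub>R (y - x)) = \<bar>t\<bar> * norm (y - x)"
    by (simp add: dist_norm)
  show ?thesis unfolding 1 2 using n by simp
qed

lemma hilbert_formula: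
  fixes x y :: "'a::euclidean_space"
  assumes "x \<noteq> y"
  shows "hilbert_dist C x y = ln (ra_of {s. x + s *\<^sub>R (y - x) \<in> C} * rb_of {s. x + s *\<^sub>R (y - x) \<in> C})"
  using assms unfolding hilbert_dist_def ra_of_def rb_of_def Let_def
  by (simp add: ratio_eq ratio_eq2)

lemma hilbert_invariant:
  fixes x y :: "'a::euclidean_space" and f :: "'a \<Rightarrow> 'b::euclidean_space"
  assumes lin: "linear f" and inj: "inj f" and pres: "\<And>z. f z \<in> C' \<longleftrightarrow> z \<in> C"
  shows "hilbert_dist C' (f x) (f y) = hilbert_dist C x y"
proof (cases "x = y")
  case True thus ?thesis by (simp add: hilbert_dist_def)
next
  case False
  hence fne: "f x \<noteq> f y" using inj by (meson injD)
  have "{s. f x + s *\<^sub>R (f y - f x) \<in> C'} = {s. x + s *\<^sub>R (y - x) \<in> C}"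
  proof -
    have "\<And>s. f x + s *\<^sub>R (f y - f x) = f (x + s *\<^sub>R (y - x))"
      using lin by (simp add: linear_add linear_diff linear_scale)
    thus ?thesis using pres by simp
  qed
  thus ?thesis using False fne by (simp add: hilbert_formula)
qed

lemma hilbert_bound:
  fixes u v :: "'a::euclidean_space"
  assumes d: "\<delta> > 0" and D: "dist u v \<le> D"
    and bu: "cball u \<delta> \<subseteq> C" and bv: "cball v \<delta> \<subseteq> C"
  shows "hilbert_dist C u v \<le> ln ((1 + D / \<delta>) * (1 + D / \<delta>))"
proof -
  have D0: "0 \<le> D" using D zero_le_dist[of u v] by linarith
  have h: "1 \<le> 1 + D / \<delta>" using D0 d by simp
  show ?thesis
proof (cases "u = v")
  case True
  have "1 * 1 \<le> (1 + D / \<delta>) * (1 + D / \<delta>)" by (rule mult_mono[OF h h]) (use h in auto)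
  thus ?thesis using True by (simp add: hilbert_dist_def)
next
  case False
  define I where "I = {s. u + s *\<^sub>R (v - u) \<in> C}"
  define \<alpha> where "\<alpha> = \<delta> / dist u v"
  have duv: "dist u v > 0" using False by simp
  have ap: "\<alpha> > 0" using d duv by (simp add: \<alpha>_def)
  have ainv: "1 / \<alpha> \<le> D / \<delta>" using d duv D by (simp add: \<alpha>_def divide_right_mono)
  have m: "- \<alpha> \<in> I"
  proof -
    have "dist u (u + (- \<alpha>) *\<^sub>R (v - u)) = \<alpha> * dist u v"
      using ap by (simp add: dist_norm norm_minus_commute)
    also have "\<dots> = \<delta>" using duv by (simp add: \<alpha>_def)
    finally show ?thesis using bu by (auto simp: I_def)
  qed
  have p: "1 + \<alpha> \<in> I"
  proof -
    have e: "u + (1 + \<alpha>) *\<^sub>R (v - u) = v + \<alpha> *\<^sub>R (v - u)" by (simp add: algebra_simps)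
    have "dist v (v + \<alpha> *\<^sub>R (v - u)) = \<alpha> * dist u v"
      using ap by (simp add: dist_norm norm_minus_commute)
    also have "\<dots> = \<delta>" using duv by (simp add: \<alpha>_def)
    finally show ?thesis using bv e by (auto simp: I_def)
  qed
  have ra: "0 < ra_of I \<and> ra_of I \<le> 1 + D / \<delta>"
  proof (cases "bdd_below I")
    case True
    have t: "Inf I \<le> - \<alpha>" using cInf_lower[OF m True] .
    hence neg: "Inf I < 0" using ap by simp
    have eq: "\<bar>1 - Inf I\<bar> / \<bar>Inf I\<bar> = 1 + 1 / (- Inf I)"
      using neg by (simp add: field_simps)
    have "1 / (- Inf I) \<le> 1 / \<alpha>" using t ap neg by (intro divide_left_mono) (auto intro: mult_neg_pos)
    moreover have "0 < 1 / (- Inf I)" using neg by simp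
    moreover have "ra_of I = 1 + 1 / (- Inf I)" using True eq neg by (simp add: ra_of_def)
    ultimately show ?thesis using ainv by linarith
  next
    case False thus ?thesis using h by (simp add: ra_of_def)
  qed
  have rb: "0 < rb_of I \<and> rb_of I \<le> 1 + D / \<delta>"
  proof (cases "bdd_above I")
    case True
    have t: "1 + \<alpha> \<le> Sup I" using cSup_upper[OF p True] .
    hence pos: "Sup I - 1 > 0" using ap by simp
    have eq: "\<bar>Sup I\<bar> / \<bar>Sup I - 1\<bar> = 1 + 1 / (Sup I - 1)"
      using pos by (simp add: field_simps)
    have "1 / (Sup I - 1) \<le> 1 / \<alpha>" using t ap pos by (intro divide_left_mono) (auto intro: mult_pos_pos)
    moreover have "0 < 1 / (Sup I - 1)" using pos by simp
    moreover have "rb_of I = 1 + 1 / (Sup I - 1)" using True eq pos by (simp add: rb_of_def)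
    ultimately show ?thesis using ainv by linarith
  next
    case False thus ?thesis using h by (simp add: rb_of_def)
  qed
  have "ra_of I * rb_of I \<le> (1 + D / \<delta>) * (1 + D / \<delta>)"
    using ra rb by (intro mult_mono) auto
  hence "ln (ra_of I * rb_of I) \<le> ln ((1 + D / \<delta>) * (1 + D / \<delta>))"
    using ra rb by (subst ln_le_cancel_iff) auto
  thus ?thesis using False by (simp add: hilbert_formula I_def)
qed
qed

lemma matrix_inv_props:
  assumes "invertible (A :: real^'n^'n)"
  shows "A ** matrix_inv A = mat 1 \<and> matrix_inv A ** A = mat 1"
  using assms unfolding invertible_def matrix_inv_def by (rule someI_ex)

definition pres_set :: "(real^'n) set \<Rightarrow> (real^'n^'n) set" where
  "pres_set C = {g. invertible g \<and> (\<lambda>x. g *v x) ` C = C}"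

lemma pres_closed:
  fixes C :: "(real^'n) set"
  assumes cone: "\<forall>x\<in>C. \<forall>t>0. t *\<^sub>R x \<in> C"
  shows "generated_matrix_group (lifted_group C G \<union> {exp 1 *\<^sub>R mat 1}) \<subseteq> pres_set C"
  unfolding generated_matrix_group_def
proof (rule Inter_lower, safe)
  fix g assume g: "g \<in> lifted_group C G"
  thus "g \<in> pres_set C" by (auto simp: lifted_group_def pres_set_def invertible_det_nz)
next
  have inv: "invertible (exp 1 *\<^sub>R mat 1 :: real^'n^'n)"
    unfolding invertible_def
    by (rule exI[of _ "(1 / exp 1) *\<^sub>R mat 1"]) (simp add: scalar_matrix_assoc[symmetric] matrix_mul_lid)
  have "(\<lambda>x. (exp 1 *\<^sub>R mat 1 :: real^'n^'n) *v x) ` C = C"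
  proof
    show "(\<lambda>x. (exp 1 *\<^sub>R mat 1 :: real^'n^'n) *v x) ` C \<subseteq> C"
      using cone by (auto simp: scaleR_matrix_vector_assoc[symmetric])
    show "C \<subseteq> (\<lambda>x. (exp 1 *\<^sub>R mat 1 :: real^'n^'n) *v x) ` C"
    proof
      fix x assume x: "x \<in> C"
      have "(exp 1 *\<^sub>R mat 1 :: real^'n^'n) *v ((1 / exp 1) *\<^sub>R x) = x"
        by (simp add: scaleR_matrix_vector_assoc[symmetric])
      moreover have "(1 / exp 1) *\<^sub>R x \<in> C" using cone x by simp
      ultimately show "x \<in> (\<lambda>x. (exp 1 *\<^sub>R mat 1 :: real^'n^'n) *v x) ` C" by (metis image_eqI)
    qed
  qed
  thus "exp 1 *\<^sub>R mat 1 \<in> pres_set C" using inv by (simp add: pres_set_def)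
next
  show "mat 1 \<in> pres_set C" by (simp add: pres_set_def invertible_def)
next
  fix a b assume a: "a \<in> pres_set C" and b: "b \<in> pres_set C"
  have "(\<lambda>x. (a ** b) *v x) ` C = (\<lambda>x. a *v x) ` ((\<lambda>x. b *v x) ` C)"
    by (simp add: image_image matrix_vector_mul_assoc)
  thus "a ** b \<in> pres_set C" using a b
    by (simp add: pres_set_def invertible_mult)
next
  fix a assume a: "a \<in> pres_set C"
  thus "invertible a" by (simp add: pres_set_def)
next
  fix a assume a: "a \<in> pres_set C"
  have ia: "invertible a" and im: "(\<lambda>x. a *v x) ` C = C" using a by (auto simp: pres_set_def)
  note mi = matrix_inv_props[OF ia]
  have "invertible (matrix_inv a)" unfolding invertible_def using mi by blast
  moreover have "(\<lambda>x. matrix_inv a *v x) ` C = C"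
  proof
    show "(\<lambda>x. matrix_inv a *v x) ` C \<subseteq> C"
    proof
      fix y assume "y \<in> (\<lambda>x. matrix_inv a *v x) ` C"
      then obtain c where c: "c \<in> C" "y = matrix_inv a *v c" by auto
      obtain z where z: "z \<in> C" "c = a *v z" using c(1) im by blast
      have "y = z" using c z mi by (simp add: matrix_vector_mul_assoc)
      thus "y \<in> C" using z by simp
    qed
    show "C \<subseteq> (\<lambda>x. matrix_inv a *v x) ` C"
    proof
      fix c assume c: "c \<in> C"
      have "a *v c \<in> C" using c im by blast
      moreover have "matrix_inv a *v (a *v c) = c" using mi by (simp add: matrix_vector_mul_assoc)
      ultimately show "c \<in> (\<lambda>x. matrix_inv a *v x) ` C" by (metis image_eqI)
    qed
  qed
  ultimately show "matrix_inv a \<in> pres_set C" by (simp add: pres_set_def)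
qed

lemma pres_invariant:
  assumes "A \<in> pres_set C"
  shows "hilbert_dist C (A *v x) (A *v y) = hilbert_dist C x y"
proof -
  have ia: "invertible A" and im: "(\<lambda>x. A *v x) ` C = C" using assms by (auto simp: pres_set_def)
  note mi = matrix_inv_props[OF ia]
  have inj: "inj ((*v) A)"
  proof (rule injI)
    fix z w assume "A *v z = A *v w"
    hence "matrix_inv A *v (A *v z) = matrix_inv A *v (A *v w)" by simp
    thus "z = w" using mi by (simp add: matrix_vector_mul_assoc)
  qed
  have pres: "\<And>z. A *v z \<in> C \<longleftrightarrow> z \<in> C"
  proof
    fix z assume "A *v z \<in> C"
    then obtain w where "w \<in> C" "A *v z = A *v w" using im by (metis imageE)
    thus "z \<in> C" using inj by (metis injD)
  next
    fix z assume "z \<in> C" thus "A *v z \<in> C" using im by blast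
  qed
  show ?thesis by (rule hilbert_invariant[OF matrix_vector_mul_linear inj pres])
qed

lemma scale_invariant:
  assumes cone: "\<forall>x\<in>C. \<forall>t>0. t *\<^sub>R x \<in> C" and t: "t > 0"
  shows "hilbert_dist C (t *\<^sub>R x) (t *\<^sub>R y) = hilbert_dist C x y"
proof -
  have inj: "inj (scaleR t :: 'a \<Rightarrow> 'a)" using t by (auto intro: injI)
  have pres: "\<And>z. t *\<^sub>R z \<in> C \<longleftrightarrow> z \<in> C"
  proof
    fix z assume "t *\<^sub>R z \<in> C"
    moreover have "1/t > 0" using t by simp
    ultimately have "(1/t) *\<^sub>R (t *\<^sub>R z) \<in> C" using cone by blast
    thus "z \<in> C" using t by simp
  next
    fix z assume "z \<in> C" thus "t *\<^sub>R z \<in> C" using cone t by simp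
  qed
  show ?thesis by (rule hilbert_invariant[OF linear_scaleR inj pres])
qed

theorem lemma7p3:
  fixes C1 :: "(real^'n) set" and G1 :: "(real^'n^'n) set"
    and C2 :: "(real^'m) set" and G2 :: "(real^'m^'m) set"
    and \<tau> :: "real^'n^'n \<Rightarrow> real^'m^'m"
    and S1 S2 :: "real^'n^'m"
  assumes M1: "compact_convex_projective_manifold_data C1 G1"
    and M2: "compact_convex_projective_manifold_data C2 G2"
    and tau_into: "\<forall>\<phi>\<in>Lambda_group C1 G1. \<tau> \<phi> \<in> Lambda_group C2 G2"
    and tau_hom: "\<forall>\<phi>\<in>Lambda_group C1 G1. \<forall>\<psi>\<in>Lambda_group C1 G1.
                    \<tau> (\<phi> ** \<psi>) = \<tau> \<phi> ** \<tau> \<psi>"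
    and S1: "S1 \<in> Lin_equiv C1 C2 (Lambda_group C1 G1) \<tau>"
    and S2: "S2 \<in> Lin_equiv C1 C2 (Lambda_group C1 G1) \<tau>"
  shows "\<exists>R\<ge>0. \<forall>x\<in>C1. hilbert_dist C2 (S1 *v x) (S2 *v x) \<le> R"
proof -
  have pc2: "proper_convex_cone C2" using M2
    unfolding compact_convex_projective_manifold_data_def by (elim conjE)
  have cone2: "\<forall>x\<in>C2. \<forall>t>0. t *\<^sub>R x \<in> C2"
    using pc2 unfolding proper_convex_cone_def by (elim conjE)
  have open2: "open C2"
    using pc2 unfolding proper_convex_cone_def by (elim conjE)
  have pc1: "proper_convex_cone C1" using M1
    unfolding compact_convex_projective_manifold_data_def by (elim conjE)
  have ne1: "C1 \<noteq> {}"
    using pc1 unfolding proper_convex_cone_def by (elim conjE)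
  have "\<exists>K. compact K \<and> K \<subseteq> C1 \<and>
        (\<forall>x\<in>C1. \<exists>g\<in>lifted_group C1 G1. \<exists>t>0. t *\<^sub>R (g *v x) \<in> K)"
    using M1 unfolding compact_convex_projective_manifold_data_def by (elim conjE)
  then obtain K where K: "compact K" "K \<subseteq> C1"
    "\<forall>x\<in>C1. \<exists>g\<in>lifted_group C1 G1. \<exists>t>0. t *\<^sub>R (g *v x) \<in> K"
    by blast
  have S1C: "\<And>x. x \<in> C1 \<Longrightarrow> S1 *v x \<in> C2" using S1 by (simp add: Lin_equiv_def)
  have S2C: "\<And>x. x \<in> C1 \<Longrightarrow> S2 *v x \<in> C2" using S2 by (simp add: Lin_equiv_def)
  define L where "L = (\<lambda>x. S1 *v x) ` K \<union> (\<lambda>x. S2 *v x) ` K"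
  have cL: "compact L" unfolding L_def
    by (intro compact_Un compact_continuous_image matrix_vector_mult_linear_continuous_on K(1))
  have LC: "L \<subseteq> C2" using K(2) S1C S2C by (auto simp: L_def)
  have cl: "closed (- C2)" using open2 by (simp add: closed_Compl)
  have dj: "L \<inter> - C2 = {}" using LC by blast
  obtain \<delta> where d: "\<delta> > 0" "\<forall>x\<in>L. \<forall>y\<in>- C2. \<delta> \<le> dist x y"
    using separate_compact_closed[OF cL cl dj] by blast
  define \<epsilon> where "\<epsilon> = \<delta> / 2"
  have ep: "\<epsilon> > 0" using d by (simp add: \<epsilon>_def)
  have balls: "\<And>u. u \<in> L \<Longrightarrow> cball u \<epsilon> \<subseteq> C2"
  proof
    fix u z assume u: "u \<in> L" and z: "z \<in> cball u \<epsilon>"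
    show "z \<in> C2"
    proof (rule ccontr)
      assume "z \<notin> C2"
      hence "\<delta> \<le> dist u z" using d u by auto
      thus False using z d by (simp add: \<epsilon>_def)
    qed
  qed
  obtain B where B: "\<forall>x\<in>L. norm x \<le> B"
    using compact_imp_bounded[OF cL] by (auto simp: bounded_iff)
  define D where "D = 2 * B"
  have Dd: "\<And>u v. u \<in> L \<Longrightarrow> v \<in> L \<Longrightarrow> dist u v \<le> D"
  proof -
    fix u v assume "u \<in> L" "v \<in> L"
    hence "norm u \<le> B" "norm v \<le> B" using B by auto
    thus "dist u v \<le> D" using norm_triangle_ineq4[of u v] by (simp add: dist_norm D_def)
  qed
  define R where "R = ln ((1 + D / \<epsilon>) * (1 + D / \<epsilon>))"
  have bnd: "\<And>k. k \<in> K \<Longrightarrow> hilbert_dist C2 (S1 *v k) (S2 *v k) \<le> R"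
  proof -
    fix k assume k: "k \<in> K"
    have u: "S1 *v k \<in> L" and v: "S2 *v k \<in> L" using k by (auto simp: L_def)
    show "hilbert_dist C2 (S1 *v k) (S2 *v k) \<le> R" unfolding R_def
      by (rule hilbert_bound[OF ep Dd[OF u v] balls[OF u] balls[OF v]])
  qed
  have R0: "R \<ge> 0"
  proof -
    obtain x0 where x0: "x0 \<in> C1" using ne1 by blast
    obtain g t where "t *\<^sub>R (g *v x0) \<in> K" using K(3) x0 by blast
    then obtain k where "k \<in> K" by blast
    hence "S1 *v k \<in> L" by (auto simp: L_def)
    hence "0 \<le> D" using Dd[of "S1 *v k" "S1 *v k"] by simp
    hence "1 \<le> 1 + D / \<epsilon>" using ep by simp
    hence "1 \<le> (1 + D / \<epsilon>) * (1 + D / \<epsilon>)" by (metis mult_mono' mult_1 zero_le_one)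
    thus ?thesis unfolding R_def by simp
  qed
  have lam2: "Lambda_group C2 G2 \<subseteq> pres_set C2"
    unfolding Lambda_group_def by (rule pres_closed[OF cone2])
  have lifted_in: "\<And>g. g \<in> lifted_group C1 G1 \<Longrightarrow> g \<in> Lambda_group C1 G1"
    unfolding Lambda_group_def generated_matrix_group_def by blast
  have "\<forall>x\<in>C1. hilbert_dist C2 (S1 *v x) (S2 *v x) \<le> R"
  proof
    fix x assume x: "x \<in> C1"
    obtain g t where g: "g \<in> lifted_group C1 G1" and t: "t > 0" and kK: "t *\<^sub>R (g *v x) \<in> K"
      using K(3) x by blast
    have gL: "g \<in> Lambda_group C1 G1" using lifted_in[OF g] .
    have tg: "\<tau> g \<in> pres_set C2" using tau_into gL lam2 by blast
    have eq: "\<And>S. S \<in> Lin_equiv C1 C2 (Lambda_group C1 G1) \<tau> \<Longrightarrow>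
        S *v (t *\<^sub>R (g *v x)) = t *\<^sub>R (\<tau> g *v (S *v x))"
    proof -
      fix S assume S: "S \<in> Lin_equiv C1 C2 (Lambda_group C1 G1) \<tau>"
      have "S ** g = \<tau> g ** S" using S gL by (simp add: Lin_equiv_def)
      hence "S *v (g *v x) = \<tau> g *v (S *v x)" by (simp add: matrix_vector_mul_assoc)
      thus "S *v (t *\<^sub>R (g *v x)) = t *\<^sub>R (\<tau> g *v (S *v x))"
        by (simp add: linear_scale[OF matrix_vector_mul_linear])
    qed
    have "hilbert_dist C2 (S1 *v x) (S2 *v x)
        = hilbert_dist C2 (\<tau> g *v (S1 *v x)) (\<tau> g *v (S2 *v x))"
      using pres_invariant[OF tg] by simp
    also have "\<dots> = hilbert_dist C2 (t *\<^sub>R (\<tau> g *v (S1 *v x))) (t *\<^sub>R (\<tau> g *v (S2 *v x)))"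
      using scale_invariant[OF cone2 t] by simp
    also have "\<dots> = hilbert_dist C2 (S1 *v (t *\<^sub>R (g *v x))) (S2 *v (t *\<^sub>R (g *v x)))"
      using eq[OF S1] eq[OF S2] by simp
    also have "\<dots> \<le> R" using bnd[OF kK] .
    finally show "hilbert_dist C2 (S1 *v x) (S2 *v x) \<le> R" .
  qed
  thus ?thesis using R0 by blast
qed

end
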